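(* $\mathrm{CH}_1=\mathrm{CH}^{\varepsilon}_1$: a language is recognised by a history-deterministic $1$-VASS without $\varepsilon$-transitions under coverability acceptance if and only if it is recognised by a history-deterministic $1$-VASS with $\varepsilon$-transitions under coverability acceptance.
   Context: Fix a finite alphabet $\Sigma$. A $k$-VASS with $\varepsilon$-transitions is a tuple $(Q,q_0,F,\delta)$ with $Q$ a finite set of states, $q_0\in Q$ initial, $F\subseteq Q$ accepting, and $\delta\subseteq Q\times(\Sigma\cup\{\varepsilon\})\times\mathbb{Z}^k\times Q$ finite. A run is a sequence of transitions $(p_{i-1},\ell_i,d_i,p_i)$ with $p_0=q_0$ such that the counter vectors $v_0=\vec 0$, $v_i=v_{i-1}+d_i$ all lie in $\mathbb{N}^k$; it is a run on the word obtained by concatenating the labels $\ell_i$ (with $\varepsilon$ the empty word). Under coverability acceptance a run is accepting if its last state is in $F$; the language is the set of words having an accepting run. A VASS without $\varepsilon$-transitions is one with $\delta\subseteq Q\times\Sigma\times\mathbb{Z}^k\times Q$. A VASS (possibly with $\varepsilon$-transitions) is history-deterministic if there is a resolver which, given the run prefix built so far and the next input letter $a$, chooses a finite sequence of $\varepsilon$-transitions followed by one transition labelled $a$, and which at the end of the input chooses a final finite sequence of $\varepsilon$-transitions, such that for every word $w$ in the language the sequence of transitions so produced on $w$ is a run (counters stay nonnegative) and is accepting. (Without $\varepsilon$-transitions this is a function choosing one transition labelled $a$ at each step.) $\mathrm{CH}_1$ denotes the class of languages recognised by history-deterministic $1$-VASS without $\varepsilon$-transitions under coverability acceptance, and $\mathrm{CH}^{\varepsilon}_1$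 the class recognised by history-deterministic $1$-VASS with $\varepsilon$-transitions under coverability acceptance. *)

theory Defs
  imports Main
begin

text \<open>1-VASS with (possibly) epsilon-transitions over alphabet 'a.
  States are natural numbers; a transition is (source, label, update, target),
  label None = epsilon, Some a = letter a.\<close>

type_synonym 'a trans = "nat \<times> 'a option \<times> int \<times> nat"

record 'a vass1 =
  states :: "nat set"
  init :: nat
  final :: "nat set"
  delta :: "'a trans set"

definition wf_vass :: "'a vass1 \<Rightarrow> bool" where
  "wf_vass A \<longleftrightarrow> finite (states A) \<and> init A \<in> states A \<and> final A \<subseteq> states A
     \<and> finite (delta A)
     \<and> (\<forall>(p,l,d,q)\<in>delta A. p \<in> states A \<and> q \<in> states A)"

definition no_eps :: "'a vass1 \<Rightarrow> bool" where
  "no_eps A \<longleftrightarrow> (\<forall>(p,l,d,q)\<in>delta A. l \<noteq> None)"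

fun src :: "'a trans \<Rightarrow> nat" where "src (p,l,d,q) = p"
fun lbl :: "'a trans \<Rightarrow> 'a option" where "lbl (p,l,d,q) = l"
fun upd :: "'a trans \<Rightarrow> int" where "upd (p,l,d,q) = d"
fun tgt :: "'a trans \<Rightarrow> nat" where "tgt (p,l,d,q) = q"

fun chain_from :: "nat \<Rightarrow> 'a trans list \<Rightarrow> bool" where
  "chain_from p [] = True"
| "chain_from p (t # ts) = (src t = p \<and> chain_from (tgt t) ts)"

definition is_run :: "'a vass1 \<Rightarrow> 'a trans list \<Rightarrow> bool" where
  "is_run A \<rho> \<longleftrightarrow> set \<rho> \<subseteq> delta A \<and> chain_from (init A) \<rho>
     \<and> (\<forall>i \<le> length \<rho>. 0 \<le> sum_list (map upd (take i \<rho>)))"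

definition last_state :: "'a vass1 \<Rightarrow> 'a trans list \<Rightarrow> nat" where
  "last_state A \<rho> = (if \<rho> = [] then init A else tgt (last \<rho>))"

definition run_word :: "'a trans list \<Rightarrow> 'a list" where
  "run_word \<rho> = concat (map (\<lambda>t. case lbl t of None \<Rightarrow> [] | Some a \<Rightarrow> [a]) \<rho>)"

definition accepting :: "'a vass1 \<Rightarrow> 'a trans list \<Rightarrow> bool" where
  "accepting A \<rho> \<longleftrightarrow> is_run A \<rho> \<and> last_state A \<rho> \<in> final A"

text \<open>Language under coverability acceptance.\<close>
definition lang :: "'a vass1 \<Rightarrow> 'a list set" where
  "lang A = {w. \<exists>\<rho>. accepting A \<rho> \<and> run_word \<rho> = w}"

definition valid_resolver :: "'a vass1 \<Rightarrow> ('a trans list \<Rightarrow> 'a \<Rightarrow> 'a trans list)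
    \<Rightarrow> ('a trans list \<Rightarrow> 'a trans list) \<Rightarrow> bool" where
  "valid_resolver A r fin \<longleftrightarrow>
     (\<forall>\<rho> a. \<exists>es t. r \<rho> a = es @ [t] \<and> set es \<subseteq> delta A \<and> (\<forall>e\<in>set es. lbl e = None)
                  \<and> t \<in> delta A \<and> lbl t = Some a)
   \<and> (\<forall>\<rho>. set (fin \<rho>) \<subseteq> delta A \<and> (\<forall>e\<in>set (fin \<rho>). lbl e = None))"

definition resolver_prefix :: "('a trans list \<Rightarrow> 'a \<Rightarrow> 'a trans list) \<Rightarrow> 'a list \<Rightarrow> 'a trans list" where
  "resolver_prefix r w = foldl (\<lambda>\<rho> a. \<rho> @ r \<rho> a) [] w"

definition resolver_run :: "('a trans list \<Rightarrow> 'a \<Rightarrow> 'a trans list)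
    \<Rightarrow> ('a trans list \<Rightarrow> 'a trans list) \<Rightarrow> 'a list \<Rightarrow> 'a trans list" where
  "resolver_run r fin w = resolver_prefix r w @ fin (resolver_prefix r w)"

definition history_deterministic :: "'a vass1 \<Rightarrow> bool" where
  "history_deterministic A \<longleftrightarrow>
     (\<exists>r fin. valid_resolver A r fin \<and>
        (\<forall>w \<in> lang A. accepting A (resolver_run r fin w)))"

definition CH1 :: "('a::finite) list set set" where
  "CH1 = {L. \<exists>A. wf_vass A \<and> no_eps A \<and> history_deterministic A \<and> lang A = L}"

definition CH1_eps :: "('a::finite) list set set" where
  "CH1_eps = {L. \<exists>A. wf_vass A \<and> history_deterministic A \<and> lang A = L}"

end

theory Submission
  imports Defs "HOL-Library.Nat_Bijection"
begin


fun ends :: "nat \<Rightarrow> 'a trans list \<Rightarrow> nat" where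
  "ends p [] = p"
| "ends p (t # ts) = ends (tgt t) ts"

definition eff :: "'a trans list \<Rightarrow> int" where
  "eff \<pi> = sum_list (map upd \<pi>)"

fun ok :: "int \<Rightarrow> 'a trans list \<Rightarrow> bool" where
  "ok c [] = (0 \<le> c)"
| "ok c (t # ts) = (0 \<le> c \<and> ok (c + upd t) ts)"

lemma eff_simps[simp]: "eff [] = 0" "eff (t # ts) = upd t + eff ts" "eff (xs @ ys) = eff xs + eff ys"
  by (auto simp: eff_def)

lemma chain_append[simp]: "chain_from p (xs @ ys) = (chain_from p xs \<and> chain_from (ends p xs) ys)"
  by (induction xs arbitrary: p) auto

lemma ends_append[simp]: "ends p (xs @ ys) = ends (ends p xs) ys"
  by (induction xs arbitrary: p) auto


lemma ok_mono: "ok c \<pi> \<Longrightarrow> c \<le> c' \<Longrightarrow> ok c' \<pi>"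
  by (induction \<pi> arbitrary: c c') force+

lemma ok_nonneg: "ok c \<pi> \<Longrightarrow> 0 \<le> c"
  by (cases \<pi>) auto

lemma ok_end: "ok c \<pi> \<Longrightarrow> 0 \<le> c + eff \<pi>"
  by (induction \<pi> arbitrary: c) (auto, metis add.assoc)

lemma ok_append[simp]: "ok c (xs @ ys) = (ok c xs \<and> ok (c + eff xs) ys)"
  by (induction xs arbitrary: c) (auto simp: add.assoc ok_nonneg)


lemma ok_iff: "ok c \<rho> = (\<forall>i \<le> length \<rho>. 0 \<le> c + sum_list (map upd (take i \<rho>)))"
proof (induction \<rho> arbitrary: c)
  case Nil
  then show ?case by auto
next
  case (Cons t ts)
  have "(\<forall>i \<le> length (t # ts). 0 \<le> c + sum_list (map upd (take i (t # ts))))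
     = (0 \<le> c \<and> (\<forall>i \<le> length ts. 0 \<le> c + sum_list (map upd (take (Suc i) (t # ts)))))"
    (is "?L = ?R")
  proof
    assume ?L then show ?R by force
  next
    assume R: ?R
    show ?L
    proof (intro allI impI)
      fix i assume "i \<le> length (t # ts)"
      then show "0 \<le> c + sum_list (map upd (take i (t # ts)))"
        using R by (cases i) auto
    qed
  qed
  then show ?case using Cons by (simp add: add.assoc)
qed

lemma is_run_iff: "is_run A \<rho> = (set \<rho> \<subseteq> delta A \<and> chain_from (init A) \<rho> \<and> ok 0 \<rho>)"
  unfolding is_run_def ok_iff by simp

lemma ends_last: "ends p \<rho> = (if \<rho> = [] then p else tgt (last \<rho>))"
  by (induction \<rho> arbitrary: p) auto

lemma last_state_ends: "last_state A \<rho> = ends (init A) \<rho>"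
  unfolding last_state_def ends_last by simp

lemma ends_take: "chain_from p \<pi> \<Longrightarrow> i < length \<pi> \<Longrightarrow> ends p (take i \<pi>) = src (\<pi> ! i)"
proof (induction \<pi> arbitrary: p i)
  case Nil then show ?case by simp
next
  case (Cons t ts) then show ?case by (cases i) auto
qed

lemma run_word_simps[simp]: "run_word [] = []"
  "run_word (xs @ ys) = run_word xs @ run_word ys"
  "run_word (t # ts) = (case lbl t of None \<Rightarrow> [] | Some a \<Rightarrow> [a]) @ run_word ts"
  by (auto simp: run_word_def)

lemma run_word_eps: "\<forall>e\<in>set es. lbl e = None \<Longrightarrow> run_word es = []"
  by (induction es) auto

lemma ends_in: "p \<in> S \<Longrightarrow> set \<rho> \<subseteq> D \<Longrightarrow> \<forall>t\<in>D. tgt t \<in> S \<Longrightarrow> ends p \<rho> \<in> S"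
  by (induction \<rho> arbitrary: p) auto

lemma ok_abs: "0 \<le> c \<Longrightarrow> ok (c + sum_list (map (\<lambda>t. \<bar>upd t\<bar>) \<pi>)) \<pi>"
proof (induction \<pi> arbitrary: c)
  case Nil then show ?case by simp
next
  case (Cons t ts)
  have "ok ((c + \<bar>upd t\<bar> + upd t) + sum_list (map (\<lambda>t. \<bar>upd t\<bar>) ts)) ts"
    using Cons by (intro Cons.IH) auto
  moreover have "0 \<le> sum_list (map (\<lambda>t. \<bar>upd t\<bar>) ts)" by (induction ts) auto
  ultimately show ?case using Cons.prems
    by (auto simp: algebra_simps)
qed

lemma sum_list_bound: "\<forall>t\<in>set \<pi>. f t \<le> (B::int) \<Longrightarrow> sum_list (map f \<pi>) \<le> int (length \<pi>) * B"
  by (induction \<pi>) (auto simp: algebra_simps)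

lemma pump:
  assumes "ok d \<beta>" "0 \<le> eff \<beta>"
  shows "ok d (concat (replicate k \<beta>)) \<and> eff (concat (replicate k \<beta>)) = int k * eff \<beta>"
  using assms
proof (induction k arbitrary: d)
  case 0 then show ?case using ok_nonneg by auto
next
  case (Suc k)
  have "ok (d + eff \<beta>) \<beta>" using Suc.prems ok_mono by fastforce
  then have "ok (d + eff \<beta>) (concat (replicate k \<beta>)) \<and> eff (concat (replicate k \<beta>)) = int k * eff \<beta>"
    using Suc by blast
  then show ?case using Suc.prems by (auto simp: algebra_simps)
qed

lemma pump_chain:
  assumes "chain_from x \<beta>" "ends x \<beta> = x"
  shows "chain_from x (concat (replicate k \<beta>)) \<and> ends x (concat (replicate k \<beta>)) = x"
  using assms by (induction k) auto

lemma pump_set: "set (concat (replicate k \<beta>)) \<subseteq> set \<beta>"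
  by (induction k) auto

lemma not_distinct_idx:
  assumes "\<not> distinct xs"
  shows "\<exists>i j. i < j \<and> j < length xs \<and> xs ! i = xs ! j"
proof -
  from assms obtain i j where "i < length xs" "j < length xs" "i \<noteq> j" "xs ! i = xs ! j"
    by (auto simp: distinct_conv_nth)
  then show ?thesis
    by (cases "i < j") (metis linorder_neqE_nat)+
qed

definition PP :: "'a trans set \<Rightarrow> nat \<Rightarrow> int \<Rightarrow> nat \<Rightarrow> 'a trans list \<Rightarrow> bool" where
  "PP T p c q \<pi> \<longleftrightarrow> set \<pi> \<subseteq> T \<and> chain_from p \<pi> \<and> ends p \<pi> = q \<and> ok c \<pi>"

lemma shorten:
  assumes S: "finite S" "\<forall>t\<in>T. src t \<in> S"
  shows "PP T p c q \<pi> \<Longrightarrow> (\<exists>\<pi>'. PP T p c q \<pi>' \<and> eff \<pi> \<le> eff \<pi>' \<and> length \<pi>' \<le> card S)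
     \<or> (\<forall>M. \<exists>\<pi>'. PP T p c q \<pi>' \<and> M \<le> eff \<pi>')"
proof (induction "length \<pi>" arbitrary: \<pi> rule: less_induct)
  case less
  show ?case
  proof (cases "length \<pi> \<le> card S")
    case True then show ?thesis using less.prems by auto
  next
    case False
    have PP: "set \<pi> \<subseteq> T" "chain_from p \<pi>" "ends p \<pi> = q" "ok c \<pi>"
      using less.prems by (auto simp: PP_def)
    have "set (map src \<pi>) \<subseteq> S" using PP S by auto
    then have "\<not> distinct (map src \<pi>)"
      using False S(1) by (metis card_mono distinct_card length_map)
    then obtain i j where ij: "i < j" "j < length \<pi>" "src (\<pi> ! i) = src (\<pi> ! j)"
      using not_distinct_idx[of "map src \<pi>"] by auto
    define \<alpha> where "\<alpha> = take i \<pi>"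
    define \<beta> where "\<beta> = drop i (take j \<pi>)"
    define \<gamma> where "\<gamma> = drop j \<pi>"
    define x where "x = src (\<pi> ! i)"
    have tj: "take j \<pi> = \<alpha> @ \<beta>"
      unfolding \<alpha>_def \<beta>_def using ij
      by (metis append_take_drop_id min.absorb1 less_imp_le take_take)
    have split: "\<pi> = \<alpha> @ \<beta> @ \<gamma>"
      using tj unfolding \<gamma>_def by (metis append.assoc append_take_drop_id)
    have ea: "ends p \<alpha> = x" unfolding \<alpha>_def x_def
      using ends_take[OF PP(2)] ij by auto
    have eab: "ends x \<beta> = x"
      using ends_take[OF PP(2), of j] ij tj ea unfolding x_def by simp
    have lb: "0 < length \<beta>" unfolding \<beta>_def using ij by simp
    have setp: "set \<alpha> \<subseteq> T" "set \<beta> \<subseteq> T" "set \<gamma> \<subseteq> T" using PP(1) split by auto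
    have ch: "chain_from p \<alpha>" "chain_from x \<beta>" "chain_from x \<gamma>"
      using PP(2) split ea eab by auto
    have eg: "ends x \<gamma> = q" using PP(3) split ea eab by simp
    have oks: "ok c \<alpha>" "ok (c + eff \<alpha>) \<beta>" "ok (c + eff \<alpha> + eff \<beta>) \<gamma>"
      using PP(4) split by (auto simp: add.assoc)
    show ?thesis
    proof (cases "eff \<beta> \<le> 0")
      case True
      let ?\<pi> = "\<alpha> @ \<gamma>"
      have "ok (c + eff \<alpha>) \<gamma>" using oks(3) True ok_mono by fastforce
      then have P2: "PP T p c q ?\<pi>" using setp ch eg ea oks unfolding PP_def by auto
      have len: "length ?\<pi> < length \<pi>" using split lb by simp
      have effle: "eff \<pi> \<le> eff ?\<pi>" using split True by simp
      from less.hyps[OF len P2] show ?thesis using effle by fastforce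
    next
      case False
      have "\<exists>\<pi>'. PP T p c q \<pi>' \<and> M \<le> eff \<pi>'" for M
      proof -
        define k where "k = nat (M - eff \<pi>) + 1"
        let ?B = "concat (replicate k \<beta>)"
        let ?\<pi> = "\<alpha> @ ?B @ \<gamma>"
        have pb: "ok (c + eff \<alpha>) ?B" "eff ?B = int k * eff \<beta>"
          using pump[OF oks(2)] False by auto
        have pc: "chain_from x ?B" "ends x ?B = x" using pump_chain[OF ch(2) eab] by auto
        have kge: "int k * eff \<beta> \<ge> int k"
        proof -
          have "int k * 1 \<le> int k * eff \<beta>" using False by (intro mult_left_mono) auto
          then show ?thesis by simp
        qed
        have "ok (c + eff \<alpha> + eff ?B) \<gamma>"
        proof -
          have "1 * eff \<beta> \<le> int k * eff \<beta>" using False k_def by (intro mult_right_mono) auto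
          then show ?thesis using pb(2) by (intro ok_mono[OF oks(3)]) simp
        qed
        then have "PP T p c q ?\<pi>" using setp ch eg ea oks pb pc pump_set[of k \<beta>]
          unfolding PP_def by (auto simp: add.assoc)
        moreover have "M \<le> eff ?\<pi>"
        proof -
          have "eff ?\<pi> = eff \<pi> + (int k - 1) * eff \<beta>" using split pb(2) by (simp add: algebra_simps)
          moreover have "(int k - 1) * 1 \<le> (int k - 1) * eff \<beta>" using False k_def
            by (intro mult_left_mono) auto
          moreover have "int k - 1 \<ge> M - eff \<pi>" unfolding k_def by simp
          ultimately show ?thesis by (metis add.commute diff_le_eq mult_1_right order_trans)
        qed
        ultimately show ?thesis by blast
      qed
      then show ?thesis by blast
    qed
  qed
qed



definition Deps :: "'a vass1 \<Rightarrow> 'a trans set" where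
  "Deps A = {t \<in> delta A. lbl t = None}"

definition macro :: "'a vass1 \<Rightarrow> nat \<Rightarrow> 'a \<Rightarrow> nat \<Rightarrow> 'a trans list \<Rightarrow> bool" where
  "macro A p a q \<pi> \<longleftrightarrow> (\<exists>es t. \<pi> = es @ [t] \<and> set es \<subseteq> Deps A \<and> t \<in> delta A \<and> lbl t = Some a
      \<and> chain_from p \<pi> \<and> ends p \<pi> = q)"

definition EE :: "'a vass1 \<Rightarrow> nat \<Rightarrow> 'a \<Rightarrow> nat \<Rightarrow> nat \<Rightarrow> int set" where
  "EE A p a q c = {eff \<pi> | \<pi>. macro A p a q \<pi> \<and> ok (int c) \<pi>}"

definition accB :: "'a vass1 \<Rightarrow> nat \<Rightarrow> nat \<Rightarrow> bool" where
  "accB A p c \<longleftrightarrow> (\<exists>\<phi>. set \<phi> \<subseteq> Deps A \<and> chain_from p \<phi> \<and> ends p \<phi> \<in> final A \<and> ok (int c) \<phi>)"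

definition ub :: "int set \<Rightarrow> bool" where
  "ub X \<longleftrightarrow> (\<forall>M. \<exists>e\<in>X. M \<le> e)"

definition maxE :: "int set \<Rightarrow> int" where
  "maxE X = (SOME M. M \<in> X \<and> (\<forall>x\<in>X. x \<le> M))"

definition leastn :: "(nat \<Rightarrow> bool) \<Rightarrow> nat" where
  "leastn P = (if \<exists>c. P c then LEAST c. P c else 0)"

definition Kw :: "'a vass1 \<Rightarrow> nat \<Rightarrow> 'a \<Rightarrow> nat \<Rightarrow> nat" where
  "Kw A p a q = leastn (\<lambda>c. ub (EE A p a q c))"

definition Ka :: "'a vass1 \<Rightarrow> nat \<Rightarrow> nat" where
  "Ka A p = leastn (accB A p)"

definition Mx :: "'a vass1 \<Rightarrow> int" where
  "Mx A = (\<Sum>t\<in>delta A. \<bar>upd t\<bar>)"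

definition KK :: "('a::finite) vass1 \<Rightarrow> nat" where
  "KK A = (card (states A) + 1) * nat (Mx A)
     + (\<Sum>p\<in>states A. \<Sum>q\<in>states A. \<Sum>a\<in>UNIV. Kw A p a q) + (\<Sum>p\<in>states A. Ka A p)"

lemma leastn:
  assumes "P c" "\<And>c c'. P c \<Longrightarrow> c \<le> c' \<Longrightarrow> P c'" "leastn P \<le> K"
  shows "P K"
proof -
  have "P (LEAST c. P c)" using assms(1) by (rule LeastI)
  then have "P (leastn P)" using assms(1) unfolding leastn_def by auto
  then show ?thesis using assms(2,3) by blast
qed

lemma EE_mono:
  assumes c: "c \<le> c'" shows "EE A p a q c \<subseteq> EE A p a q c'"
proof
  fix x assume x: "x \<in> EE A p a q c"
  obtain \<pi> where \<pi>: "x = eff \<pi>" "macro A p a q \<pi>" "ok (int c) \<pi>"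
    using x unfolding EE_def by auto
  have "ok (int c') \<pi>" using \<pi>(3) c ok_mono of_nat_le_iff by blast
  then show "x \<in> EE A p a q c'" using \<pi> unfolding EE_def by auto
qed

lemma ub_mono:
  assumes u: "ub (EE A p a q c)" and c: "c \<le> c'" shows "ub (EE A p a q c')"
  unfolding ub_def
proof
  fix M
  obtain e where e: "e \<in> EE A p a q c" "M \<le> e" using u unfolding ub_def by blast
  have "e \<in> EE A p a q c'" by (rule subsetD[OF EE_mono[OF c] e(1)])
  then show "\<exists>e\<in>EE A p a q c'. M \<le> e" using e(2) by blast
qed

lemma acc_mono: "accB A p c \<Longrightarrow> c \<le> c' \<Longrightarrow> accB A p c'"
proof -
  assume a: "accB A p c" and c: "c \<le> c'"
  then obtain \<phi> where \<phi>: "set \<phi> \<subseteq> Deps A" "chain_from p \<phi>" "ends p \<phi> \<in> final A" "ok (int c) \<phi>"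
    unfolding accB_def by blast
  have "ok (int c') \<phi>" using \<phi>(4) c ok_mono of_nat_le_iff by blast
  then show ?thesis using \<phi> unfolding accB_def by blast
qed

lemma maxE:
  assumes "X \<noteq> {}" "\<not> ub X"
  shows "maxE X \<in> X \<and> (\<forall>x\<in>X. x \<le> maxE X)"
proof -
  obtain x0 where x0: "x0 \<in> X" using assms(1) by auto
  obtain b where b: "\<forall>x\<in>X. x < b" using assms(2) unfolding ub_def by (meson not_le)
  let ?Y = "X \<inter> {x0..b}"
  have fin: "finite ?Y" by auto
  have "x0 \<in> ?Y" using x0 b[rule_format, OF x0] by auto
  then have ne: "?Y \<noteq> {}" by auto
  have "Max ?Y \<in> X \<and> (\<forall>x\<in>X. x \<le> Max ?Y)"
  proof (intro conjI ballI)
    show "Max ?Y \<in> X" using Max_in[OF fin ne] by auto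
    fix x assume "x \<in> X"
    show "x \<le> Max ?Y"
    proof (cases "x0 \<le> x")
      case True then show ?thesis using \<open>x \<in> X\<close> b fin by (intro Max_ge) auto
    next
      case False
      have "x0 \<le> Max ?Y" using x0 b fin by (intro Max_ge) auto
      then show ?thesis using False by simp
    qed
  qed
  then show ?thesis unfolding maxE_def by (rule someI)
qed

lemma wf_src: "wf_vass A \<Longrightarrow> t \<in> delta A \<Longrightarrow> src t \<in> states A \<and> tgt t \<in> states A"
  unfolding wf_vass_def by (cases t) auto

lemma short_ok:
  assumes "wf_vass A" "set \<pi> \<subseteq> delta A" "length \<pi> \<le> card (states A) + 1"
  shows "ok (int ((card (states A) + 1) * nat (Mx A))) \<pi>"
proof -
  have fin: "finite (delta A)" using assms(1) unfolding wf_vass_def by auto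
  have "\<forall>t\<in>set \<pi>. \<bar>upd t\<bar> \<le> Mx A"
    using assms(2) fin unfolding Mx_def by (auto intro!: member_le_sum)
  then have "sum_list (map (\<lambda>t. \<bar>upd t\<bar>) \<pi>) \<le> int (length \<pi>) * Mx A"
    by (rule sum_list_bound)
  also have "\<dots> \<le> int (card (states A) + 1) * Mx A"
    using assms(3) by (intro mult_right_mono) (auto simp: Mx_def sum_nonneg)
  also have "\<dots> = int ((card (states A) + 1) * nat (Mx A))"
  proof -
    have "0 \<le> Mx A" by (simp add: Mx_def sum_nonneg)
    then show ?thesis by (simp only: of_nat_mult int_nat_eq) simp
  qed
  finally show ?thesis using ok_abs[of 0 \<pi>] ok_mono by fastforce
qed

lemma Kw_le:
  assumes "wf_vass A" "p \<in> states A" "q \<in> states A"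
  shows "Kw A p a q \<le> KK (A :: ('a::finite) vass1)"
proof -
  have fin: "finite (states A)" using assms unfolding wf_vass_def by auto
  have "Kw A p a q \<le> (\<Sum>a\<in>UNIV. Kw A p a q)" by (rule member_le_sum) auto
  also have "\<dots> \<le> (\<Sum>q\<in>states A. \<Sum>a\<in>UNIV. Kw A p a q)"
    by (rule member_le_sum[where f = "\<lambda>q. \<Sum>a\<in>UNIV. Kw A p a q"]) (use assms fin in auto)
  also have "\<dots> \<le> (\<Sum>p\<in>states A. \<Sum>q\<in>states A. \<Sum>a\<in>UNIV. Kw A p a q)"
    by (rule member_le_sum[where f = "\<lambda>p. \<Sum>q\<in>states A. \<Sum>a\<in>UNIV. Kw A p a q"]) (use assms fin in auto)
  finally show ?thesis unfolding KK_def by linarith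
qed

lemma Ka_le:
  assumes "wf_vass A" "p \<in> states A"
  shows "Ka A p \<le> KK (A :: ('a::finite) vass1)"
proof -
  have fin: "finite (states A)" using assms unfolding wf_vass_def by auto
  have "Ka A p \<le> (\<Sum>p\<in>states A. Ka A p)" by (rule member_le_sum) (use assms fin in auto)
  then show ?thesis unfolding KK_def by linarith
qed

lemma acc_K:
  assumes "wf_vass A" "p \<in> states A" "accB A p c"
  shows "accB A p (KK (A :: ('a::finite) vass1))"
proof -
  have "leastn (accB A p) \<le> KK A" using Ka_le[OF assms(1,2)] unfolding Ka_def .
  then show ?thesis
    apply (rule leastn[where P = "accB A p" and c = c, rotated 2])
     apply (rule assms(3))
    by (erule acc_mono)
qed

lemma ub_K:
  assumes "wf_vass A" "p \<in> states A" "q \<in> states A" "ub (EE A p a q c)"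
  shows "ub (EE A p a q (KK (A :: ('a::finite) vass1)))"
proof -
  have "leastn (\<lambda>c. ub (EE A p a q c)) \<le> KK A" using Kw_le[OF assms(1,2,3)] unfolding Kw_def .
  then show ?thesis
    apply (rule leastn[where P = "\<lambda>c. ub (EE A p a q c)" and c = c, rotated 2])
     apply (rule assms(4))
    by (erule ub_mono)
qed

lemma dominate:
  assumes wf: "wf_vass A" and pq: "p \<in> states A" "q \<in> states A"
    and e: "e \<in> EE A p a q c"
  shows "\<exists>e'\<in>EE A p a q (KK (A :: ('a::finite) vass1)). e \<le> e'"
proof -
  obtain \<pi> where \<pi>: "e = eff \<pi>" "macro A p a q \<pi>" "ok (int c) \<pi>" using e unfolding EE_def by auto
  then obtain es t where et: "\<pi> = es @ [t]" "set es \<subseteq> Deps A" "t \<in> delta A" "lbl t = Some a"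
     "chain_from p \<pi>" "ends p \<pi> = q" unfolding macro_def by auto
  have PPes: "PP (Deps A) p (int c) (src t) es" using et \<pi>(3) unfolding PP_def by auto
  have finS: "finite (states A)" using wf unfolding wf_vass_def by auto
  have srcS: "\<forall>t\<in>Deps A. src t \<in> states A" using wf_src[OF wf] unfolding Deps_def by auto
  have okt: "ok (int c + eff es) [t]" using \<pi>(3) et(1) by simp
  from shorten[OF finS srcS PPes] show ?thesis
  proof
    assume "\<exists>\<pi>'. PP (Deps A) p (int c) (src t) \<pi>' \<and> eff es \<le> eff \<pi>' \<and> length \<pi>' \<le> card (states A)"
    then obtain es' where es': "PP (Deps A) p (int c) (src t) es'" "eff es \<le> eff es'"
      "length es' \<le> card (states A)" by blast
    have m: "macro A p a q (es' @ [t])" using es'(1) et unfolding macro_def PP_def by auto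
    have st: "set (es' @ [t]) \<subseteq> delta A" using es'(1) et(3) unfolding PP_def Deps_def by auto
    have len: "length (es' @ [t]) \<le> card (states A) + 1" using es'(3) by simp
    have "ok (int ((card (states A) + 1) * nat (Mx A))) (es' @ [t])"
      by (rule short_ok[OF wf st len])
    then have "ok (int (KK A)) (es' @ [t])" by (rule ok_mono) (simp add: KK_def sum_nonneg)
    then have "eff (es' @ [t]) \<in> EE A p a q (KK A)" using m unfolding EE_def
      by (intro CollectI exI[of _ "es' @ [t]"] conjI refl)
    moreover have "e \<le> eff (es' @ [t])" using \<pi>(1) et(1) es'(2) by simp
    ultimately show ?thesis by blast
  next
    assume H: "\<forall>M. \<exists>\<pi>'. PP (Deps A) p (int c) (src t) \<pi>' \<and> M \<le> eff \<pi>'"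
    have "ub (EE A p a q c)" unfolding ub_def
    proof
      fix M
      obtain es'' where es'': "PP (Deps A) p (int c) (src t) es''" "\<bar>M\<bar> + \<bar>upd t\<bar> \<le> eff es''"
        using H by blast
      have m: "macro A p a q (es'' @ [t])" using es''(1) et unfolding macro_def PP_def by auto
      have "ok (int c) (es'' @ [t])" using es'' ok_nonneg[OF \<pi>(3)] unfolding PP_def by auto
      then have "eff (es'' @ [t]) \<in> EE A p a q c" using m unfolding EE_def
        by (intro CollectI exI[of _ "es'' @ [t]"] conjI refl)
      moreover have "M \<le> eff (es'' @ [t])" using es''(2) by simp
      ultimately show "\<exists>e\<in>EE A p a q c. M \<le> e" by blast
    qed
    then have "ub (EE A p a q (KK A))" using ub_K[OF wf pq] by blast
    then show ?thesis unfolding ub_def by blast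
  qed
qed



abbreviation enc :: "nat \<Rightarrow> nat \<Rightarrow> nat" where "enc p m \<equiv> prod_encode (p, m)"

definition D1 :: "('a::finite) vass1 \<Rightarrow> 'a trans set" where
  "D1 A = (\<lambda>(p,a,q,v,v'). (enc p v, Some a, maxE (EE A p a q v) + int v - int v', enc q v')) `
     {(p,a,q,v,v'). p \<in> states A \<and> q \<in> states A \<and> v \<le> KK A \<and> v' \<le> KK A
        \<and> EE A p a q v \<noteq> {} \<and> \<not> ub (EE A p a q v)}"

definition D2 :: "('a::finite) vass1 \<Rightarrow> 'a trans set" where
  "D2 A = (\<lambda>(p,a,q,v). (enc p v, Some a, 0, enc q (Suc (KK A)))) `
     {(p,a,q,v). p \<in> states A \<and> q \<in> states A \<and> v \<le> KK A \<and> ub (EE A p a q v)}"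

definition D3 :: "('a::finite) vass1 \<Rightarrow> 'a trans set" where
  "D3 A = (\<lambda>(p,a,q). (enc p (Suc (KK A)), Some a, 0, enc q (Suc (KK A)))) `
     {(p,a,q). p \<in> states A \<and> q \<in> states A \<and> (\<exists>c. EE A p a q c \<noteq> {})}"

definition Bv :: "('a::finite) vass1 \<Rightarrow> 'a vass1" where
  "Bv A = \<lparr> states = (\<lambda>(p,m). enc p m) ` (states A \<times> {..Suc (KK A)}),
            init = enc (init A) 0,
            final = (\<lambda>(p,m). enc p m) ` {(p,m). p \<in> states A \<and>
                ((m \<le> KK A \<and> accB A p m) \<or> (m = Suc (KK A) \<and> (\<exists>c. accB A p c)))},
            delta = D1 A \<union> D2 A \<union> D3 A \<rparr>"

lemma Bv_simps[simp]:
  "states (Bv A) = (\<lambda>(p,m). enc p m) ` (states A \<times> {..Suc (KK A)})"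
  "init (Bv A) = enc (init A) 0"
  "final (Bv A) = (\<lambda>(p,m). enc p m) ` {(p,m). p \<in> states A \<and>
                ((m \<le> KK A \<and> accB A p m) \<or> (m = Suc (KK A) \<and> (\<exists>c. accB A p c)))}"
  "delta (Bv A) = D1 A \<union> D2 A \<union> D3 A"
  by (simp_all add: Bv_def)

lemma B_wf:
  assumes wf: "wf_vass (A::('a::finite) vass1)"
  shows "wf_vass (Bv A) \<and> no_eps (Bv A)"
proof -
  have fS: "finite (states A)" and i: "init A \<in> states A" using wf unfolding wf_vass_def by auto
  let ?X = "states A \<times> (UNIV::'a set) \<times> states A \<times> {..KK A} \<times> {..KK A}"
  have f1: "finite (D1 A)" unfolding D1_def
    by (rule finite_imageI, rule finite_subset[of _ ?X]) (auto simp: fS)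
  let ?Y = "states A \<times> (UNIV::'a set) \<times> states A \<times> {..KK A}"
  have f2: "finite (D2 A)" unfolding D2_def
    by (rule finite_imageI, rule finite_subset[of _ ?Y]) (auto simp: fS)
  let ?Z = "states A \<times> (UNIV::'a set) \<times> states A"
  have f3: "finite (D3 A)" unfolding D3_def
    by (rule finite_imageI, rule finite_subset[of _ ?Z]) (auto simp: fS)
  have t: "\<forall>(p,l,d,q)\<in>delta (Bv A). p \<in> states (Bv A) \<and> q \<in> states (Bv A)"
    by (auto simp: D1_def D2_def D3_def)
  have ne: "no_eps (Bv A)" unfolding no_eps_def by (auto simp: D1_def D2_def D3_def)
  have "wf_vass (Bv A)" unfolding wf_vass_def
    using fS i f1 f2 f3 t by auto
  then show ?thesis using ne by blast
qed

lemma is_run_snoc: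
  "is_run A (\<rho> @ \<pi>) = (is_run A \<rho> \<and> set \<pi> \<subseteq> delta A \<and> chain_from (last_state A \<rho>) \<pi> \<and> ok (eff \<rho>) \<pi>)"
  unfolding is_run_iff last_state_ends by auto

lemma last_state_app: "last_state A (\<rho> @ \<pi>) = ends (last_state A \<rho>) \<pi>"
  unfolding last_state_ends by simp

lemma macro_props:
  assumes "macro A p a q \<pi>"
  shows "run_word \<pi> = [a] \<and> set \<pi> \<subseteq> delta A \<and> chain_from p \<pi> \<and> ends p \<pi> = q"
proof -
  obtain es t where et: "\<pi> = es @ [t]" "set es \<subseteq> Deps A" "t \<in> delta A" "lbl t = Some a"
      "chain_from p \<pi>" "ends p \<pi> = q" using assms unfolding macro_def by blast
  have "run_word es = []" using et(2) run_word_eps unfolding Deps_def by blast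
  then show ?thesis using et unfolding Deps_def by auto
qed

lemma run_nonneg: "is_run A \<rho> \<Longrightarrow> 0 \<le> eff \<rho>"
  unfolding is_run_iff using ok_end by fastforce

lemma ext_run:
  assumes "is_run A \<rho>A" "macro A (last_state A \<rho>A) a q \<pi>" "ok (eff \<rho>A) \<pi>"
  shows "is_run A (\<rho>A @ \<pi>) \<and> run_word (\<rho>A @ \<pi>) = run_word \<rho>A @ [a] \<and> last_state A (\<rho>A @ \<pi>) = q
      \<and> eff (\<rho>A @ \<pi>) = eff \<rho>A + eff \<pi>"
proof -
  have m: "run_word \<pi> = [a]" "set \<pi> \<subseteq> delta A" "chain_from (last_state A \<rho>A) \<pi>"
    "ends (last_state A \<rho>A) \<pi> = q" using macro_props[OF assms(2)] by auto
  have "is_run A (\<rho>A @ \<pi>)" unfolding is_run_snoc using assms(1,3) m by simp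
  then show ?thesis unfolding last_state_app using m by simp
qed

lemma sound_run:
  fixes A :: "('a::finite) vass1"
  assumes wf: "wf_vass A"
  shows "is_run (Bv A) \<rho> \<Longrightarrow> \<exists>p m. last_state (Bv A) \<rho> = enc p m \<and> m \<le> Suc (KK A) \<and>
     (m \<le> KK A \<longrightarrow> (\<exists>\<rho>A. is_run A \<rho>A \<and> run_word \<rho>A = run_word \<rho> \<and> last_state A \<rho>A = p
                          \<and> int m + eff \<rho> \<le> eff \<rho>A)) \<and>
     (m = Suc (KK A) \<longrightarrow> (\<forall>N. \<exists>\<rho>A. is_run A \<rho>A \<and> run_word \<rho>A = run_word \<rho> \<and> last_state A \<rho>A = p
                          \<and> N \<le> eff \<rho>A))"
proof (induction \<rho> rule: rev_induct)
  case Nil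
  have "is_run A []" unfolding is_run_iff by simp
  have l: "last_state (Bv A) [] = enc (init A) 0" by (simp add: last_state_def)
  have l2: "last_state A [] = init A" by (simp add: last_state_def)
  have "\<exists>\<rho>A. is_run A \<rho>A \<and> run_word \<rho>A = run_word ([] :: 'a trans list) \<and> last_state A \<rho>A = init A
                          \<and> int 0 + eff ([] :: 'a trans list) \<le> eff \<rho>A"
    by (rule exI[of _ "[]"]) (simp add: l2 \<open>is_run A []\<close>)
  then show ?case
    apply (rule_tac exI[of _ "init A"], rule_tac exI[of _ 0])
    using l by simp
next
  case (snoc t \<rho>)
  have r: "is_run (Bv A) \<rho>" "t \<in> delta (Bv A)" "src t = last_state (Bv A) \<rho>"
    "0 \<le> eff \<rho>" "0 \<le> eff \<rho> + upd t"
    using snoc.prems unfolding is_run_snoc by auto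
  obtain p m where pm: "last_state (Bv A) \<rho> = enc p m" "m \<le> Suc (KK A)"
    "m \<le> KK A \<longrightarrow> (\<exists>\<rho>A. is_run A \<rho>A \<and> run_word \<rho>A = run_word \<rho> \<and> last_state A \<rho>A = p
                          \<and> int m + eff \<rho> \<le> eff \<rho>A)"
    "m = Suc (KK A) \<longrightarrow> (\<forall>N. \<exists>\<rho>A. is_run A \<rho>A \<and> run_word \<rho>A = run_word \<rho> \<and> last_state A \<rho>A = p
                          \<and> N \<le> eff \<rho>A)"
    using snoc.IH[OF r(1)] by blast
  have ls: "last_state (Bv A) (\<rho> @ [t]) = tgt t" unfolding last_state_def by simp
  have rw: "\<And>a. lbl t = Some a \<Longrightarrow> run_word (\<rho> @ [t]) = run_word \<rho> @ [a]" by simp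
  note ext = ext_run
  from r(2) consider "t \<in> D1 A" | "t \<in> D2 A" | "t \<in> D3 A" by auto
  then show ?case
  proof cases
    case 1
    then obtain x where x: "x \<in> {(p,a,q,v,v'). p \<in> states A \<and> q \<in> states A \<and> v \<le> KK A \<and> v' \<le> KK A
        \<and> EE A p a q v \<noteq> {} \<and> \<not> ub (EE A p a q v)}"
      "t = (\<lambda>(p,a,q,v,v'). (enc p v, Some a, maxE (EE A p a q v) + int v - int v', enc q v')) x"
      unfolding D1_def by blast
    obtain p1 a q v v' where xx: "x = (p1, a, q, v, v')" using prod_cases5 by blast
    have tt: "t = (enc p1 v, Some a, maxE (EE A p1 a q v) + int v - int v', enc q v')"
      "p1 \<in> states A" "q \<in> states A" "v \<le> KK A" "v' \<le> KK A" "EE A p1 a q v \<noteq> {}" "\<not> ub (EE A p1 a q v)"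
      using x unfolding xx by auto
    have pv: "p1 = p" "v = m" using r(3) pm(1) tt(1) by auto
    obtain \<rho>A where \<rho>A: "is_run A \<rho>A" "run_word \<rho>A = run_word \<rho>" "last_state A \<rho>A = p"
      "int m + eff \<rho> \<le> eff \<rho>A" using pm(3) tt(4) pv by auto
    let ?M = "maxE (EE A p a q m)"
    have "?M \<in> EE A p a q m" using maxE tt(6,7) pv by blast
    then obtain \<pi> where \<pi>: "?M = eff \<pi>" "macro A p a q \<pi>" "ok (int m) \<pi>" unfolding EE_def by blast
    have "ok (eff \<rho>A) \<pi>" using ok_mono[OF \<pi>(3)] \<rho>A(4) r(4) by simp
    then have E: "is_run A (\<rho>A @ \<pi>) \<and> run_word (\<rho>A @ \<pi>) = run_word \<rho> @ [a] \<and> last_state A (\<rho>A @ \<pi>) = q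
      \<and> eff (\<rho>A @ \<pi>) = eff \<rho>A + eff \<pi>" using ext[OF \<rho>A(1)] \<rho>A \<pi>(2) by auto
    show ?thesis
      apply (rule exI[of _ q], rule exI[of _ v'])
      using E tt pv \<rho>A(4) \<pi>(1) ls rw[of a] by auto
  next
    case 2
    then obtain p1 a q v where tt: "t = (enc p1 v, Some a, 0, enc q (Suc (KK A)))"
      "p1 \<in> states A" "q \<in> states A" "v \<le> KK A" "ub (EE A p1 a q v)"
      unfolding D2_def by auto
    have pv: "p1 = p" "v = m" using r(3) pm(1) tt(1) by auto
    obtain \<rho>A where \<rho>A: "is_run A \<rho>A" "run_word \<rho>A = run_word \<rho>" "last_state A \<rho>A = p"
      "int m + eff \<rho> \<le> eff \<rho>A" using pm(3) tt(4) pv by auto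
    have "\<exists>\<rho>A'. is_run A \<rho>A' \<and> run_word \<rho>A' = run_word (\<rho> @ [t]) \<and> last_state A \<rho>A' = q \<and> N \<le> eff \<rho>A'" for N
    proof -
      obtain e where e: "e \<in> EE A p a q m" "N \<le> e" using tt(5) pv unfolding ub_def by blast
      then obtain \<pi> where \<pi>: "e = eff \<pi>" "macro A p a q \<pi>" "ok (int m) \<pi>" unfolding EE_def by blast
      have "ok (eff \<rho>A) \<pi>" using ok_mono[OF \<pi>(3)] \<rho>A(4) r(4) by simp
      then have E: "is_run A (\<rho>A @ \<pi>) \<and> run_word (\<rho>A @ \<pi>) = run_word \<rho> @ [a] \<and> last_state A (\<rho>A @ \<pi>) = q
        \<and> eff (\<rho>A @ \<pi>) = eff \<rho>A + eff \<pi>" using ext[OF \<rho>A(1)] \<rho>A \<pi>(2) by auto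
      have "N \<le> eff (\<rho>A @ \<pi>)" using E e \<pi>(1) \<rho>A(4) r(4) by simp
      then show ?thesis using E tt(1) by (intro exI[of _ "\<rho>A @ \<pi>"]) auto
    qed
    note H = this
    show ?thesis
      apply (rule exI[of _ q], rule exI[of _ "Suc (KK A)"])
      using H ls tt(1) by auto
  next
    case 3
    then obtain x where x: "x \<in> {(p,a,q). p \<in> states A \<and> q \<in> states A \<and> (\<exists>c. EE A p a q c \<noteq> {})}"
      "t = (\<lambda>(p,a,q). (enc p (Suc (KK A)), Some a, 0, enc q (Suc (KK A)))) x"
      unfolding D3_def by blast
    obtain p1 a q where xx: "x = (p1, a, q)" using prod_cases3 by blast
    have tt: "t = (enc p1 (Suc (KK A)), Some a, 0, enc q (Suc (KK A)))"
      "p1 \<in> states A" "q \<in> states A" "\<exists>c. EE A p1 a q c \<noteq> {}"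
      using x unfolding xx by auto
    have pv: "p1 = p" "m = Suc (KK A)" using r(3) pm(1) tt(1) by auto
    obtain c e where e: "e \<in> EE A p a q c" using tt(4) pv by blast
    then obtain \<pi> where \<pi>: "e = eff \<pi>" "macro A p a q \<pi>" "ok (int c) \<pi>" unfolding EE_def by blast
    have "\<exists>\<rho>A'. is_run A \<rho>A' \<and> run_word \<rho>A' = run_word (\<rho> @ [t]) \<and> last_state A \<rho>A' = q \<and> N \<le> eff \<rho>A'" for N
    proof -
      obtain \<rho>A where \<rho>A: "is_run A \<rho>A" "run_word \<rho>A = run_word \<rho>" "last_state A \<rho>A = p"
        "\<bar>N\<bar> + int c + \<bar>eff \<pi>\<bar> \<le> eff \<rho>A" using pm(4) pv by blast
      have "ok (eff \<rho>A) \<pi>" using ok_mono[OF \<pi>(3)] \<rho>A(4) by simp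
      then have E: "is_run A (\<rho>A @ \<pi>) \<and> run_word (\<rho>A @ \<pi>) = run_word \<rho> @ [a] \<and> last_state A (\<rho>A @ \<pi>) = q
        \<and> eff (\<rho>A @ \<pi>) = eff \<rho>A + eff \<pi>" using ext[OF \<rho>A(1)] \<rho>A \<pi>(2) by auto
      have "N \<le> eff (\<rho>A @ \<pi>)" using E \<rho>A(4) by simp
      then show ?thesis using E tt(1) by (intro exI[of _ "\<rho>A @ \<pi>"]) auto
    qed
    note H = this
    show ?thesis
      apply (rule exI[of _ q], rule exI[of _ "Suc (KK A)"])
      using H ls tt(1) by auto
  qed
qed

lemma acc_ext:
  assumes "is_run A \<rho>A" "accB A (last_state A \<rho>A) c" "int c \<le> eff \<rho>A"
  shows "accepting A (\<rho>A @ (SOME \<phi>. set \<phi> \<subseteq> Deps A \<and> chain_from (last_state A \<rho>A) \<phi>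
            \<and> ends (last_state A \<rho>A) \<phi> \<in> final A \<and> ok (int c) \<phi>))
         \<and> run_word (\<rho>A @ (SOME \<phi>. set \<phi> \<subseteq> Deps A \<and> chain_from (last_state A \<rho>A) \<phi>
            \<and> ends (last_state A \<rho>A) \<phi> \<in> final A \<and> ok (int c) \<phi>)) = run_word \<rho>A"
proof -
  let ?\<phi> = "SOME \<phi>. set \<phi> \<subseteq> Deps A \<and> chain_from (last_state A \<rho>A) \<phi>
            \<and> ends (last_state A \<rho>A) \<phi> \<in> final A \<and> ok (int c) \<phi>"
  have \<phi>: "set ?\<phi> \<subseteq> Deps A \<and> chain_from (last_state A \<rho>A) ?\<phi>
            \<and> ends (last_state A \<rho>A) ?\<phi> \<in> final A \<and> ok (int c) ?\<phi>"
    using assms(2) unfolding accB_def by (rule someI_ex)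
  have "ok (eff \<rho>A) ?\<phi>" using \<phi> assms(3) ok_mono by blast
  moreover have "set ?\<phi> \<subseteq> delta A" using \<phi> unfolding Deps_def by auto
  ultimately have "is_run A (\<rho>A @ ?\<phi>)" unfolding is_run_snoc using assms(1) \<phi> by simp
  moreover have "run_word ?\<phi> = []" using \<phi> run_word_eps unfolding Deps_def by blast
  ultimately show ?thesis unfolding accepting_def last_state_app using \<phi> by simp
qed

lemma sound_lang:
  fixes A :: "('a::finite) vass1"
  assumes wf: "wf_vass A"
  shows "lang (Bv A) \<subseteq> lang A"
proof
  fix w assume "w \<in> lang (Bv A)"
  then obtain \<rho> where \<rho>: "accepting (Bv A) \<rho>" "run_word \<rho> = w" unfolding lang_def by blast
  have r: "is_run (Bv A) \<rho>" "last_state (Bv A) \<rho> \<in> final (Bv A)" using \<rho>(1) unfolding accepting_def by auto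
  obtain p m where pm: "last_state (Bv A) \<rho> = enc p m" "m \<le> Suc (KK A)"
    "m \<le> KK A \<longrightarrow> (\<exists>\<rho>A. is_run A \<rho>A \<and> run_word \<rho>A = run_word \<rho> \<and> last_state A \<rho>A = p
                          \<and> int m + eff \<rho> \<le> eff \<rho>A)"
    "m = Suc (KK A) \<longrightarrow> (\<forall>N. \<exists>\<rho>A. is_run A \<rho>A \<and> run_word \<rho>A = run_word \<rho> \<and> last_state A \<rho>A = p
                          \<and> N \<le> eff \<rho>A)"
    using sound_run[OF wf r(1)] by blast
  have fin: "(m \<le> KK A \<and> accB A p m) \<or> (m = Suc (KK A) \<and> (\<exists>c. accB A p c))"
    using r(2) pm(1) by auto
  have e0: "0 \<le> eff \<rho>" using run_nonneg[OF r(1)] .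
  obtain \<rho>A c where A: "is_run A \<rho>A" "run_word \<rho>A = w" "last_state A \<rho>A = p" "int c \<le> eff \<rho>A" "accB A p c"
  proof (cases "m \<le> KK A")
    case True
    then obtain \<rho>A where "is_run A \<rho>A" "run_word \<rho>A = run_word \<rho>" "last_state A \<rho>A = p"
                          "int m + eff \<rho> \<le> eff \<rho>A" using pm(3) by blast
    moreover have "accB A p m" using fin True by auto
    ultimately show ?thesis using that[of \<rho>A m] \<rho>(2) e0 by simp
  next
    case False
    then obtain c where c: "accB A p c" using fin by auto
    obtain \<rho>A where "is_run A \<rho>A" "run_word \<rho>A = run_word \<rho>" "last_state A \<rho>A = p"
                          "int c \<le> eff \<rho>A" using pm(4) False fin by blast
    then show ?thesis using that[of \<rho>A c] \<rho>(2) c by simp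
  qed
  show "w \<in> lang A"
    using acc_ext[of A \<rho>A c] A unfolding lang_def by auto
qed



definition stepC :: "('a::finite) vass1 \<Rightarrow> nat \<Rightarrow> nat \<Rightarrow> nat \<Rightarrow> int \<Rightarrow> 'a \<Rightarrow> 'a trans" where
  "stepC A p q m x a =
    (if m = Suc (KK A) then (enc p (Suc (KK A)), Some a, 0, enc q (Suc (KK A)))
     else if ub (EE A p a q m) then (enc p m, Some a, 0, enc q (Suc (KK A)))
     else (enc p m, Some a, maxE (EE A p a q m) + int m - int (min (nat (int m + x + maxE (EE A p a q m))) (KK A)),
           enc q (min (nat (int m + x + maxE (EE A p a q m))) (KK A))))"

definition stepB :: "('a::finite) vass1 \<Rightarrow> ('a trans list \<Rightarrow> 'a \<Rightarrow> 'a trans list) \<Rightarrow> 'a trans list \<Rightarrow> 'a \<Rightarrow> 'a trans" where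
  "stepB A rA \<rho> a = stepC A (last_state A (resolver_prefix rA (run_word \<rho>)))
      (tgt (last (rA (resolver_prefix rA (run_word \<rho>)) a)))
      (snd (prod_decode (last_state (Bv A) \<rho>))) (eff \<rho>) a"

definition rB :: "('a::finite) vass1 \<Rightarrow> ('a trans list \<Rightarrow> 'a \<Rightarrow> 'a trans list) \<Rightarrow> 'a trans list \<Rightarrow> 'a \<Rightarrow> 'a trans list" where
  "rB A rA \<rho> a = (if stepB A rA \<rho> a \<in> delta (Bv A) \<and> lbl (stepB A rA \<rho> a) = Some a then [stepB A rA \<rho> a]
      else [SOME t. t \<in> delta (Bv A) \<and> lbl t = Some a])"

lemma rp_snoc: "resolver_prefix r (u @ [a]) = resolver_prefix r u @ r (resolver_prefix r u) a"
  by (simp add: resolver_prefix_def)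

lemma foldl_app_ex: "\<exists>X. foldl (\<lambda>\<rho> a. \<rho> @ r \<rho> a) \<rho>0 z = \<rho>0 @ X"
proof (induction z arbitrary: \<rho>0)
  case Nil then show ?case by simp
next
  case (Cons a z)
  obtain X where "foldl (\<lambda>\<rho> a. \<rho> @ r \<rho> a) (\<rho>0 @ r \<rho>0 a) z = (\<rho>0 @ r \<rho>0 a) @ X" using Cons by blast
  then show ?case by simp
qed

lemma rp_prefix: "\<exists>X. resolver_prefix r (u @ z) = resolver_prefix r u @ X"
  unfolding resolver_prefix_def foldl_append by (rule foldl_app_ex)

lemma rp_word:
  assumes "valid_resolver A r fin"
  shows "run_word (resolver_prefix r u) = u"
proof (induction u rule: rev_induct)
  case Nil then show ?case by (simp add: resolver_prefix_def)
next
  case (snoc a u)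
  obtain es t where "r (resolver_prefix r u) a = es @ [t]" "\<forall>e\<in>set es. lbl e = None" "lbl t = Some a"
    using assms unfolding valid_resolver_def by blast
  moreover have "run_word es = []" using calculation(2) by (rule run_word_eps)
  ultimately show ?case using snoc by (simp add: rp_snoc)
qed

lemma is_run_prefix: "is_run A (xs @ ys) \<Longrightarrow> is_run A xs"
  unfolding is_run_snoc by simp

lemma a_trans_exists:
  fixes A :: "('a::finite) vass1"
  assumes wf: "wf_vass A" and v: "valid_resolver A r fin"
  shows "\<exists>t. t \<in> delta (Bv A) \<and> lbl t = Some a"
proof -
  obtain es t where t: "t \<in> delta A" "lbl t = Some a"
    using v unfolding valid_resolver_def by blast
  have st: "src t \<in> states A" "tgt t \<in> states A" using wf_src[OF wf t(1)] by auto
  have "macro A (src t) a (tgt t) [t]" unfolding macro_def using t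
    by (intro exI[of _ "[]"] exI[of _ t]) simp
  moreover have "ok (int (nat \<bar>upd t\<bar>)) [t]" by simp
  ultimately have "eff [t] \<in> EE A (src t) a (tgt t) (nat \<bar>upd t\<bar>)" unfolding EE_def by blast
  then have "(src t, a, tgt t) \<in> {(p,a,q). p \<in> states A \<and> q \<in> states A \<and> (\<exists>c. EE A p a q c \<noteq> {})}"
    using st by blast
  then have "(enc (src t) (Suc (KK A)), Some a, 0, enc (tgt t) (Suc (KK A))) \<in> D3 A"
    unfolding D3_def by (rule rev_image_eqI) simp
  then show ?thesis by (intro exI[of _ "(enc (src t) (Suc (KK A)), Some a, 0, enc (tgt t) (Suc (KK A)))"]) simp
qed

lemma rB_valid:
  fixes A :: "('a::finite) vass1"
  assumes wf: "wf_vass A" and v: "valid_resolver A r fin"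
  shows "valid_resolver (Bv A) (rB A rA) (\<lambda>_. [])"
  unfolding valid_resolver_def
proof (intro conjI allI)
  fix \<rho> a
  define T where "T = (SOME t. t \<in> delta (Bv A) \<and> lbl t = Some a)"
  have "\<exists>t. t \<in> delta (Bv A) \<and> lbl t = Some a" by (rule a_trans_exists[OF wf v])
  then have T: "T \<in> delta (Bv A) \<and> lbl T = Some a" unfolding T_def by (rule someI_ex)
  show "\<exists>es t. rB A rA \<rho> a = es @ [t] \<and> set es \<subseteq> delta (Bv A) \<and> (\<forall>e\<in>set es. lbl e = None)
                  \<and> t \<in> delta (Bv A) \<and> lbl t = Some a"
  proof (cases "stepB A rA \<rho> a \<in> delta (Bv A) \<and> lbl (stepB A rA \<rho> a) = Some a")
    case True
    have "rB A rA \<rho> a = [stepB A rA \<rho> a]" unfolding rB_def by (rule if_P[OF True])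
    then show ?thesis using True
      by (intro exI[of _ "[]"] exI[of _ "stepB A rA \<rho> a"]) (simp del: Bv_simps)
  next
    case False
    have "rB A rA \<rho> a = [T]" unfolding rB_def T_def by (rule if_not_P[OF False])
    then show ?thesis using T
      by (intro exI[of _ "[]"] exI[of _ T]) (simp del: Bv_simps)
  qed
qed auto

lemma rB_step:
  assumes "stepB A rA \<rho> a \<in> delta (Bv A)" "lbl (stepB A rA \<rho> a) = Some a"
  shows "rB A rA \<rho> a = [stepB A rA \<rho> a]"
  unfolding rB_def using assms by (rule if_P[OF conjI])

lemma runA_prefix:
  assumes "accepting A (resolver_run rA finA w)" "u @ z = w"
  shows "is_run A (resolver_prefix rA u)"
proof -
  obtain X where "resolver_prefix rA (u @ z) = resolver_prefix rA u @ X" using rp_prefix by blast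
  then have "is_run A (resolver_prefix rA u @ X @ finA (resolver_prefix rA w))"
    using assms unfolding accepting_def resolver_run_def by simp
  then show ?thesis by (rule is_run_prefix)
qed

lemma inv_rB:
  fixes A :: "('a::finite) vass1"
  assumes wf: "wf_vass A" and v: "valid_resolver A rA finA"
    and accB: "accepting A (resolver_run rA finA w)"
  shows "u @ z = w \<Longrightarrow> is_run (Bv A) (resolver_prefix (rB A rA) u) \<and> run_word (resolver_prefix (rB A rA) u) = u
    \<and> (\<exists>m. last_state (Bv A) (resolver_prefix (rB A rA) u) = enc (last_state A (resolver_prefix rA u)) m
         \<and> m \<le> Suc (KK A) \<and> (m \<le> KK A \<longrightarrow> eff (resolver_prefix rA u) \<le> int m + eff (resolver_prefix (rB A rA) u)
              \<and> (m < KK A \<longrightarrow> eff (resolver_prefix (rB A rA) u) = 0)))"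
proof (induction u arbitrary: z rule: rev_induct)
  case Nil
  have "is_run (Bv A) []" unfolding is_run_iff by simp
  moreover have "last_state (Bv A) [] = enc (last_state A []) 0" by (simp add: last_state_def)
  ultimately show ?case unfolding resolver_prefix_def by (intro conjI exI[of _ 0]) auto
next
  case (snoc a u)
  let ?\<rho>A = "resolver_prefix rA u"
  let ?\<rho>B = "resolver_prefix (rB A rA) u"
  let ?\<pi> = "rA ?\<rho>A a"
  obtain m where IH: "is_run (Bv A) ?\<rho>B" "run_word ?\<rho>B = u"
    "last_state (Bv A) ?\<rho>B = enc (last_state A ?\<rho>A) m" "m \<le> Suc (KK A)"
    "m \<le> KK A \<longrightarrow> eff ?\<rho>A \<le> int m + eff ?\<rho>B \<and> (m < KK A \<longrightarrow> eff ?\<rho>B = 0)"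
    using snoc.IH[of "a # z"] snoc.prems by auto
  have runA: "is_run A (?\<rho>A @ ?\<pi>)" using runA_prefix[OF accB snoc.prems] by (simp add: rp_snoc)
  obtain es t0 where et: "?\<pi> = es @ [t0]" "set es \<subseteq> delta A" "\<forall>e\<in>set es. lbl e = None"
    "t0 \<in> delta A" "lbl t0 = Some a" using v unfolding valid_resolver_def by blast
  define p where "p = last_state A ?\<rho>A"
  define q where "q = tgt t0"
  have runA0: "is_run A ?\<rho>A" "chain_from p ?\<pi>" "ok (eff ?\<rho>A) ?\<pi>" "set ?\<pi> \<subseteq> delta A"
    using runA unfolding is_run_snoc p_def by auto
  have endq: "ends p ?\<pi> = q" unfolding q_def et(1) ends_last by simp
  have lastA: "last_state A (?\<rho>A @ ?\<pi>) = q" unfolding last_state_app p_def[symmetric] by (rule endq)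
  have mac: "macro A p a q ?\<pi>" unfolding macro_def
    using et runA0(2) endq unfolding Deps_def by blast
  have fS: "\<forall>t\<in>delta A. tgt t \<in> states A" using wf_src[OF wf] by blast
  have i: "init A \<in> states A" using wf unfolding wf_vass_def by auto
  have pS: "p \<in> states A" unfolding p_def last_state_ends
    using ends_in[OF i _ fS] runA0(1) unfolding is_run_iff by blast
  have qS: "q \<in> states A" unfolding q_def using wf_src[OF wf et(4)] by blast
  have cA0: "0 \<le> eff ?\<rho>A" by (rule run_nonneg[OF runA0(1)])
  have cA1: "0 \<le> eff ?\<rho>A + eff ?\<pi>" using run_nonneg[OF runA] by simp
  have e0: "eff ?\<pi> \<in> EE A p a q (nat (eff ?\<rho>A))"
    unfolding EE_def using mac runA0(3) cA0 by auto
  have B0: "0 \<le> eff ?\<rho>B" by (rule run_nonneg[OF IH(1)])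
  have stepeq: "stepB A rA ?\<rho>B a = stepC A p q m (eff ?\<rho>B) a"
    unfolding stepB_def IH(2) IH(3) p_def q_def using et(1) by simp
  have rpB: "resolver_prefix (rB A rA) (u @ [a]) = ?\<rho>B @ rB A rA ?\<rho>B a" by (rule rp_snoc)
  have rpA: "resolver_prefix rA (u @ [a]) = ?\<rho>A @ ?\<pi>" by (rule rp_snoc)
  have concl: "?case" if tB: "t \<in> delta (Bv A)" "lbl t = Some a" "stepB A rA ?\<rho>B a = t"
     and src: "src t = enc p m" and okt: "0 \<le> eff ?\<rho>B + upd t"
     and m': "tgt t = enc q m'" "m' \<le> Suc (KK A)"
     "m' \<le> KK A \<longrightarrow> eff (?\<rho>A @ ?\<pi>) \<le> int m' + eff (?\<rho>B @ [t]) \<and> (m' < KK A \<longrightarrow> eff (?\<rho>B @ [t]) = 0)"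
     for t m'
  proof -
    have rb: "rB A rA ?\<rho>B a = [t]" using rB_step[of A rA ?\<rho>B a] tB by simp
    have "is_run (Bv A) (?\<rho>B @ [t])" unfolding is_run_snoc
      using IH(1) tB(1) src IH(3) p_def okt B0 by simp
    moreover have "run_word (?\<rho>B @ [t]) = u @ [a]" using IH(2) tB(2) by simp
    moreover have "last_state (Bv A) (?\<rho>B @ [t]) = enc (last_state A (?\<rho>A @ ?\<pi>)) m'"
      using m'(1) lastA by (simp add: last_state_def)
    ultimately show ?thesis unfolding rpB rpA rb using m'(2,3) by blast
  qed
  show ?case
  proof (cases "m = Suc (KK A)")
    case True
    let ?t = "(enc p (Suc (KK A)), Some a, 0, enc q (Suc (KK A)))"
    have "(p, a, q) \<in> {(p,a,q). p \<in> states A \<and> q \<in> states A \<and> (\<exists>c. EE A p a q c \<noteq> {})}"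
      using pS qS e0 by blast
    then have "?t \<in> D3 A" unfolding D3_def by (rule rev_image_eqI) simp
    then have tin: "?t \<in> delta (Bv A)" by simp
    have st: "stepB A rA ?\<rho>B a = ?t" unfolding stepeq stepC_def using True by simp
    show ?thesis
      apply (rule concl[OF tin, where m' = "Suc (KK A)"])
      using st B0 True by auto
  next
    case False
    then have mK: "m \<le> KK A" using IH(4) by simp
    have cAm: "eff ?\<rho>A \<le> int m + eff ?\<rho>B" "m < KK A \<Longrightarrow> eff ?\<rho>B = 0" using IH(5) mK by auto
    have dom: "\<exists>e'\<in>EE A p a q m. eff ?\<pi> \<le> e'"
    proof (cases "nat (eff ?\<rho>A) \<le> m")
      case True
      have "eff ?\<pi> \<in> EE A p a q m" by (rule subsetD[OF EE_mono[OF True] e0])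
      then show ?thesis by blast
    next
      case False
      then have "m = KK A" using cAm mK cA0 by (cases "m < KK A") auto
      moreover have "KK A \<le> nat (eff ?\<rho>A)" using False calculation by simp
      ultimately show ?thesis using dominate[OF wf pS qS e0] by simp
    qed
    show ?thesis
    proof (cases "ub (EE A p a q m)")
      case True
      let ?t = "(enc p m, Some a, 0, enc q (Suc (KK A)))"
      have "(p, a, q, m) \<in> {(p,a,q,v). p \<in> states A \<and> q \<in> states A \<and> v \<le> KK A \<and> ub (EE A p a q v)}"
        using pS qS mK True by blast
      then have "?t \<in> D2 A" unfolding D2_def by (rule rev_image_eqI) simp
      then have tin: "?t \<in> delta (Bv A)" by simp
      have st: "stepB A rA ?\<rho>B a = ?t" unfolding stepeq stepC_def using True False by simp
      show ?thesis
        apply (rule concl[OF tin, where m' = "Suc (KK A)"])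
        using st B0 by auto
    next
      case nub: False
      define M where "M = maxE (EE A p a q m)"
      have ne: "EE A p a q m \<noteq> {}" using dom by blast
      have Mp: "M \<in> EE A p a q m" "\<forall>x\<in>EE A p a q m. x \<le> M" using maxE[OF ne nub] unfolding M_def by auto
      have Mge: "eff ?\<pi> \<le> M" using dom Mp(2) by fastforce
      define cB where "cB = int m + eff ?\<rho>B + M"
      define v' where "v' = min (nat cB) (KK A)"
      have cBge: "eff ?\<rho>A + eff ?\<pi> \<le> cB" unfolding cB_def using cAm(1) Mge by simp
      let ?t = "(enc p m, Some a, M + int m - int v', enc q v')"
      have "(p, a, q, m, v') \<in> {(p,a,q,v,v'). p \<in> states A \<and> q \<in> states A \<and> v \<le> KK A \<and> v' \<le> KK A
        \<and> EE A p a q v \<noteq> {} \<and> \<not> ub (EE A p a q v)}"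
        using pS qS mK ne nub unfolding v'_def by auto
      then have "?t \<in> D1 A" unfolding D1_def by (rule rev_image_eqI) (simp add: M_def)
      then have tin: "?t \<in> delta (Bv A)" by simp
      have st: "stepB A rA ?\<rho>B a = ?t" unfolding stepeq stepC_def using nub False
        by (simp add: M_def cB_def v'_def Let_def)
      have v'le: "int v' \<le> cB" unfolding v'_def using cBge cA1 by auto
      have v'eq: "v' < KK A \<Longrightarrow> int v' = cB" unfolding v'_def using cBge cA1 by auto
      have vK: "v' \<le> KK A" unfolding v'_def by simp
      show ?thesis
        apply (intro concl[OF tin, where m' = v'])
        using st v'le v'eq vK cBge unfolding cB_def by auto
    qed
  qed
qed

lemma complete:
  fixes A :: "('a::finite) vass1"
  assumes wf: "wf_vass A" and v: "valid_resolver A rA finA"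
    and accB: "accepting A (resolver_run rA finA w)"
  shows "accepting (Bv A) (resolver_run (rB A rA) (\<lambda>_. []) w) \<and> run_word (resolver_run (rB A rA) (\<lambda>_. []) w) = w"
proof -
  let ?\<rho>A = "resolver_prefix rA w"
  let ?\<rho>B = "resolver_prefix (rB A rA) w"
  let ?\<phi> = "finA ?\<rho>A"
  obtain m where I: "is_run (Bv A) ?\<rho>B" "run_word ?\<rho>B = w"
    "last_state (Bv A) ?\<rho>B = enc (last_state A ?\<rho>A) m" "m \<le> Suc (KK A)"
    "m \<le> KK A \<longrightarrow> eff ?\<rho>A \<le> int m + eff ?\<rho>B \<and> (m < KK A \<longrightarrow> eff ?\<rho>B = 0)"
    using inv_rB[OF wf v accB, of w "[]"] by auto
  define p where "p = last_state A ?\<rho>A"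
  have rA: "is_run A (?\<rho>A @ ?\<phi>)" "last_state A (?\<rho>A @ ?\<phi>) \<in> final A"
    using accB unfolding accepting_def resolver_run_def by auto
  have r0: "is_run A ?\<rho>A" "chain_from p ?\<phi>" "ok (eff ?\<rho>A) ?\<phi>" "set ?\<phi> \<subseteq> delta A"
    using rA(1) unfolding is_run_snoc p_def by auto
  have cA0: "0 \<le> eff ?\<rho>A" by (rule run_nonneg[OF r0(1)])
  have "set ?\<phi> \<subseteq> Deps A" using v r0(4) unfolding valid_resolver_def Deps_def by blast
  moreover have "ends p ?\<phi> \<in> final A" using rA(2) unfolding last_state_app p_def .
  ultimately have accp: "accB A p (nat (eff ?\<rho>A))" unfolding accB_def using r0 cA0 by auto
  have fS: "\<forall>t\<in>delta A. tgt t \<in> states A" using wf_src[OF wf] by blast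
  have i: "init A \<in> states A" using wf unfolding wf_vass_def by auto
  have pS: "p \<in> states A" unfolding p_def last_state_ends
    using ends_in[OF i _ fS] r0(1) unfolding is_run_iff by blast
  have "(m \<le> KK A \<and> accB A p m) \<or> (m = Suc (KK A) \<and> (\<exists>c. accB A p c))"
  proof (cases "m = Suc (KK A)")
    case True then show ?thesis using accp by blast
  next
    case False
    then have mK: "m \<le> KK A" using I(4) by simp
    have cAm: "eff ?\<rho>A \<le> int m + eff ?\<rho>B" "m < KK A \<Longrightarrow> eff ?\<rho>B = 0" using I(5) mK by auto
    have "accB A p m"
    proof (cases "nat (eff ?\<rho>A) \<le> m")
      case True then show ?thesis using acc_mono[OF accp] by blast
    next
      case False
      then have "m = KK A" using cAm mK cA0 by (cases "m < KK A") auto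
      then show ?thesis using acc_K[OF wf pS accp] by simp
    qed
    then show ?thesis using mK by blast
  qed
  then have "(p, m) \<in> {(p,m). p \<in> states A \<and>
                ((m \<le> KK A \<and> accB A p m) \<or> (m = Suc (KK A) \<and> (\<exists>c. accB A p c)))}" using pS by blast
  then have "enc p m \<in> final (Bv A)" unfolding Bv_simps by (rule rev_image_eqI) simp
  then have "accepting (Bv A) ?\<rho>B" unfolding accepting_def using I(1) I(3) p_def by simp
  then show ?thesis using I(2) unfolding resolver_run_def by simp
qed

theorem eps_elim:
  fixes A :: "('a::finite) vass1"
  assumes wf: "wf_vass A" and hd: "history_deterministic A"
  shows "wf_vass (Bv A) \<and> no_eps (Bv A) \<and> history_deterministic (Bv A) \<and> lang (Bv A) = lang A"
proof -
  obtain rA finA where v: "valid_resolver A rA finA" and h: "\<forall>w \<in> lang A. accepting A (resolver_run rA finA w)"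
    using hd unfolding history_deterministic_def by blast
  have c: "accepting (Bv A) (resolver_run (rB A rA) (\<lambda>_. []) w) \<and> run_word (resolver_run (rB A rA) (\<lambda>_. []) w) = w"
    if "w \<in> lang A" for w using complete[OF wf v h[rule_format, OF that]] .
  have "lang A \<subseteq> lang (Bv A)"
  proof
    fix w assume "w \<in> lang A"
    then show "w \<in> lang (Bv A)" using c unfolding lang_def by blast
  qed
  then have eq: "lang (Bv A) = lang A" using sound_lang[OF wf] by blast
  have "history_deterministic (Bv A)" unfolding history_deterministic_def eq
    using rB_valid[OF wf v, of rA] c by blast
  then show ?thesis using B_wf[OF wf] eq by blast
qed

theorem mainTheorem6:
  shows "(CH1 :: ('a::finite) list set set) = CH1_eps"
proof
  show "(CH1 :: ('a::finite) list set set) \<subseteq> CH1_eps" unfolding CH1_def CH1_eps_def by blast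
next
  show "(CH1_eps :: ('a::finite) list set set) \<subseteq> CH1"
  proof
    fix L :: "'a list set" assume "L \<in> CH1_eps"
    then obtain A :: "'a vass1" where A: "wf_vass A" "history_deterministic A" "lang A = L"
      unfolding CH1_eps_def by blast
    show "L \<in> CH1" unfolding CH1_def using eps_elim[OF A(1,2)] A(3) by blast
  qed
qed

end
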